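(* Let $c>0$ be the absolute constant for which, for every $X\sim\mathcal N(0,\sigma^2\mathbf I)$ in $\mathbb R^d$, every fixed $\mathbf y\ne 0$ and every $\delta>0$, $P(|X^\top\mathbf y|\ge\delta)\le\exp(1-\frac{c\delta^2}{\sigma^2\|\mathbf y\|_2^2})$. Let $\mathbf y_i=\mathbf x_i+\mathbf e_i$ for $i=1,2$, where $\mathbf x_i\in\mathbb R^d$ are random with $\|\mathbf x_i\|_2=1$ and $\mathbf e_1,\mathbf e_2\sim\mathcal N(0,\sigma^2\mathbf I)$ are independent of each other and of $\mathbf x_1,\mathbf x_2$. Let $v\in\mathbb R$, $p\in[0,1]$ and $\delta>0$. If $P(\mathbf x_1^\top\mathbf x_2>v)\ge p$, then \[ P(\mathbf y_1^\top\mathbf y_2>v-3\delta)\ge p-\exp\!\Big(1-\frac{c\delta^2}{\sigma^2}\Big)-\frac{d\sigma^4}{2\delta^2}. \] If $P(\mathbf x_1^\top\mathbf x_2<v)\ge p$, then \[ P(\mathbf y_1^\top\mathbf y_2<v+3\delta)\ge p-\exp\!\Big(1-\frac{c\delta^2}{\sigma^2}\Big)-\frac{d\sigma^4}{2\delta^2}. \] *)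

theory Defs
  imports "HOL-Probability.Probability"
begin

definition gauss_density :: "real \<Rightarrow> real^'d \<Rightarrow> real" where
  "gauss_density s x = (\<Prod>j\<in>UNIV. normal_density 0 s (x $ j))"

definition gaussian_vec :: "real \<Rightarrow> (real^'d) measure" where
  "gaussian_vec s = density lborel (\<lambda>x. ennreal (gauss_density s x))"

end

theory Submission
  imports Defs
begin

lemma W_meas[measurable]: "(\<lambda>f. \<chi> j. f j) \<in> (PiM (UNIV::'d::finite set) (\<lambda>_. lborel)) \<rightarrow>\<^sub>M (borel :: (real^'d) measure)"
proof (subst borel_measurable_euclidean_space, intro ballI)
  fix i :: "real^'d" assume "i \<in> Basis"
  then obtain k where k: "i = axis k 1" by (auto simp: Basis_vec_def)
  have "(\<lambda>f::'d\<Rightarrow>real. (\<chi> j. f j) \<bullet> i) = (\<lambda>f. f k)" using k by (auto simp: inner_axis)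
  then show "(\<lambda>f::'d\<Rightarrow>real. (\<chi> j. f j) \<bullet> i) \<in> borel_measurable (PiM UNIV (\<lambda>_. lborel))" by simp
qed

lemma lborel_vec: "(lborel :: (real^'d::finite) measure) = distr (PiM UNIV (\<lambda>_::'d. lborel)) borel (\<lambda>f. \<chi> j. f j)"
proof (rule lborel_eqI)
  fix l u :: "real^'d" assume le: "\<And>b. b \<in> Basis \<Longrightarrow> l \<bullet> b \<le> u \<bullet> b"
  have le': "l $ j \<le> u $ j" for j using le[of "axis j 1"] by (auto simp: Basis_vec_def inner_axis)
  have pre: "(\<lambda>f. \<chi> j. f j) -` box l u \<inter> space (PiM UNIV (\<lambda>_::'d. lborel)) = PiE UNIV (\<lambda>j. {l$j<..<u$j})"
    by (auto simp: mem_box_cart space_PiM PiE_iff)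
  have "emeasure (distr (PiM UNIV (\<lambda>_::'d. lborel)) borel (\<lambda>f. \<chi> j. f j)) (box l u)
     = emeasure (PiM UNIV (\<lambda>_::'d. lborel)) (PiE UNIV (\<lambda>j. {l$j<..<u$j}))"
    by (subst emeasure_distr) (auto simp: pre)
  also have "\<dots> = (\<Prod>j\<in>UNIV. emeasure lborel {l$j<..<u$j})"
    by (rule product_sigma_finite.emeasure_PiM) (auto simp: product_sigma_finite_def sigma_finite_lborel)
  also have "\<dots> = (\<Prod>j\<in>UNIV. ennreal (u$j - l$j))" using le' by simp
  also have "\<dots> = ennreal (\<Prod>j\<in>UNIV. (u$j - l$j))" using le' by (simp add: prod_ennreal)
  also have "(\<Prod>j\<in>UNIV. (u$j - l$j)) = (\<Prod>b\<in>Basis. (u - l) \<bullet> b)"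
  proof -
    have B: "(Basis :: (real^'d) set) = (\<lambda>j. axis j 1) ` UNIV" by (auto simp: Basis_vec_def)
    have inj: "inj (\<lambda>j::'d. axis j (1::real))" by (auto simp: inj_def axis_eq_axis)
    show ?thesis unfolding B by (subst prod.reindex[OF inj]) (simp add: inner_axis)
  qed
  finally show "emeasure (distr (PiM UNIV (\<lambda>_::'d. lborel)) borel (\<lambda>f. \<chi> j. f j)) (box l u) = (\<Prod>b\<in>Basis. (u - l) \<bullet> b)" .
qed simp

abbreviation ND :: "real \<Rightarrow> real measure" where "ND s \<equiv> density lborel (\<lambda>x. ennreal (normal_density 0 s x))"
abbreviation QQ :: "real \<Rightarrow> ('d::finite \<Rightarrow> real) measure" where "QQ s \<equiv> PiM UNIV (\<lambda>_. ND s)"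

lemma PiM_ND: assumes s: "0 < s" shows "QQ s = density (PiM UNIV (\<lambda>_::'d::finite. lborel)) (\<lambda>f. \<Prod>j\<in>UNIV. ennreal (normal_density 0 s (f j)))"
proof (rule sym, rule product_sigma_finite.PiM_eqI)
  show "product_sigma_finite (\<lambda>_::'d. ND s)"
    unfolding product_sigma_finite_def
    using prob_space_normal_density[OF s] prob_space_imp_sigma_finite by blast
  fix A :: "'d \<Rightarrow> real set" assume A: "\<And>i. i \<in> UNIV \<Longrightarrow> A i \<in> sets (ND s)"
  have A'[measurable]: "A i \<in> sets borel" for i using A[of i] by simp
  have ind: "indicator (PiE UNIV A) f = (\<Prod>j\<in>UNIV. indicator (A j) (f j) :: ennreal)" for f
    by (auto simp: indicator_def PiE_iff)
  have "emeasure (density (PiM UNIV (\<lambda>_::'d. lborel)) (\<lambda>f. \<Prod>j\<in>UNIV. ennreal (normal_density 0 s (f j)))) (PiE UNIV A)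
      = (\<integral>\<^sup>+ f. (\<Prod>j\<in>UNIV. ennreal (normal_density 0 s (f j))) * indicator (PiE UNIV A) f \<partial>PiM UNIV (\<lambda>_. lborel))"
    by (subst emeasure_density) (auto intro!: sets_PiM_I_finite)
  also have "\<dots> = (\<integral>\<^sup>+ f. (\<Prod>j\<in>UNIV. ennreal (normal_density 0 s (f j)) * indicator (A j) (f j)) \<partial>PiM UNIV (\<lambda>_. lborel))"
    by (simp add: ind prod.distrib)
  also have "\<dots> = (\<Prod>j\<in>UNIV. \<integral>\<^sup>+ x. ennreal (normal_density 0 s x) * indicator (A j) x \<partial>lborel)"
    by (rule product_sigma_finite.product_nn_integral_prod) (auto simp: product_sigma_finite_def sigma_finite_lborel)
  also have "\<dots> = (\<Prod>j\<in>UNIV. emeasure (ND s) (A j))"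
    by (subst emeasure_density) auto
  finally show "emeasure (density (PiM UNIV (\<lambda>_::'d. lborel)) (\<lambda>f. \<Prod>j\<in>UNIV. ennreal (normal_density 0 s (f j)))) (PiE UNIV A)
      = (\<Prod>j\<in>UNIV. emeasure (ND s) (A j))" .
qed (simp, simp only: sets_density, rule sets_PiM_cong, auto)

lemma gaussian_vec_distr: assumes s: "0 < s" shows "gaussian_vec s = distr (QQ s) (borel :: (real^'d::finite) measure) (\<lambda>f. \<chi> j. f j)"
proof -
  have "gaussian_vec s = density (distr (PiM UNIV (\<lambda>_::'d. lborel)) borel (\<lambda>f. \<chi> j. f j)) (\<lambda>x. ennreal (gauss_density s x))"
    unfolding gaussian_vec_def by (subst lborel_vec) simp
  also have "\<dots> = distr (density (PiM UNIV (\<lambda>_::'d. lborel)) (\<lambda>f. ennreal (gauss_density s (\<chi> j. f j)))) borel (\<lambda>f. \<chi> j. f j)"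
    by (rule density_distr) (auto simp: gauss_density_def)
  also have "(\<lambda>f. ennreal (gauss_density s (\<chi> j. f j))) = (\<lambda>f::'d\<Rightarrow>real. \<Prod>j\<in>UNIV. ennreal (normal_density 0 s (f j)))"
    by (auto simp: gauss_density_def prod_ennreal)
  finally show ?thesis by (simp add: PiM_ND[OF s])
qed

lemma QQ_prob: assumes s: "0 < s" shows "prob_space (QQ s)"
  by (rule prob_space_PiM) (rule prob_space_normal_density[OF s])

lemma QQ_indep: assumes s: "0 < s" shows "prob_space.indep_vars (QQ s) (\<lambda>_. ND s) (\<lambda>j f. f j) (UNIV::'d::finite set)"
proof -
  interpret prob_space "QQ s" by (rule QQ_prob[OF s])
  have "distr (QQ s) (PiM UNIV (\<lambda>_::'d. ND s)) (\<lambda>x. \<lambda>i\<in>UNIV. x i) = QQ s"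
    by (subst distr_cong[where g="\<lambda>x. x"]) (auto simp: space_PiM)
  moreover have "distr (QQ s) (ND s) (\<lambda>f. f j) = ND s" for j :: 'd
    by (rule distr_PiM_component) (auto intro: prob_space_normal_density[OF s])
  ultimately show ?thesis
    by (subst indep_vars_iff_distr_eq_PiM) auto
qed

lemma QQ_comp: assumes s: "0 < s" shows "distributed (QQ s) lborel (\<lambda>f::'d::finite\<Rightarrow>real. f j) (\<lambda>x. ennreal (normal_density 0 s x))"
proof -
  have "distr (QQ s) lborel (\<lambda>f::'d\<Rightarrow>real. f j) = distr (QQ s) (ND s) (\<lambda>f. f j)"
    by (rule distr_cong) auto
  also have "\<dots> = ND s"
    by (rule distr_PiM_component) (auto intro: prob_space_normal_density[OF s])
  finally show ?thesis unfolding distributed_def by auto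
qed

lemma gauss_transport:
  assumes s: "0 < s" and h[measurable]: "h \<in> borel_measurable (borel :: (real^'d::finite) measure)"
    and D: "distributed (QQ s) lborel (\<lambda>f. h (\<chi> j. f j)) g"
  shows "distributed (gaussian_vec s :: (real^'d) measure) lborel h g"
proof -
  have "distr (gaussian_vec s :: (real^'d) measure) lborel h = distr (QQ s) lborel (\<lambda>f. h (\<chi> j. f j))"
    unfolding gaussian_vec_distr[OF s] by (subst distr_distr) (auto simp: comp_def)
  then show ?thesis using D unfolding distributed_def by (auto simp: gaussian_vec_def)
qed

lemma gauss_law:
  assumes s: "0 < s" and u: "u \<noteq> (0::real^'d::finite)"
  shows "distributed (gaussian_vec s :: (real^'d) measure) lborel (\<lambda>z. z \<bullet> u) (\<lambda>x. ennreal (normal_density 0 (s * norm u) x))"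
proof (rule gauss_transport[OF s])
  interpret Q: prob_space "QQ s :: ('d \<Rightarrow> real) measure" by (rule QQ_prob[OF s])
  define J where "J = {j. u $ j \<noteq> 0}"
  have J: "finite J" "J \<noteq> {}" using u by (auto simp: J_def vec_eq_iff)
  have ind: "Q.indep_vars (\<lambda>_. borel) (\<lambda>j f. u $ j * f j) J"
  proof -
    have "Q.indep_vars (\<lambda>_. ND s) (\<lambda>j f. f j) J"
      using QQ_indep[OF s] by (rule Q.indep_vars_subset) auto
    then have "Q.indep_vars (\<lambda>_. borel) (\<lambda>j f. (\<lambda>x. u $ j * x) (f j)) J"
      by (rule Q.indep_vars_compose2) (use measurable_cong_sets[of "ND s" lborel borel borel] in simp)
    then show ?thesis by simp
  qed
  have dist: "distributed (QQ s) lborel (\<lambda>f. u $ j * f j) (\<lambda>x. ennreal (normal_density 0 (\<bar>u $ j\<bar> * s) x))"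
    if "j \<in> J" for j
    using Q.normal_density_affine[OF QQ_comp[OF s, of j] s, of "u $ j" 0] that by (simp add: J_def)
  have S: "distributed (QQ s) lborel (\<lambda>f. \<Sum>j\<in>J. u $ j * f j) (\<lambda>x. ennreal (normal_density (\<Sum>j\<in>J. 0) (sqrt (\<Sum>j\<in>J. (\<bar>u $ j\<bar> * s)\<^sup>2)) x))"
    by (rule Q.sum_indep_normal[OF J ind]) (use s dist in \<open>simp_all add: J_def\<close>)
  have e0: "(\<Sum>j\<in>J. (u $ j)\<^sup>2) = (\<Sum>j\<in>UNIV. (u $ j)\<^sup>2)"
    by (rule sum.mono_neutral_left) (auto simp: J_def)
  have e1: "(\<Sum>j\<in>J. (\<bar>u $ j\<bar> * s)\<^sup>2) = s\<^sup>2 * (\<Sum>j\<in>UNIV. (u $ j)\<^sup>2)"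
    unfolding e0[symmetric] sum_distrib_left by (rule sum.cong) (auto simp: power_mult_distrib)
  have e2: "sqrt (\<Sum>j\<in>J. (\<bar>u $ j\<bar> * s)\<^sup>2) = s * norm u"
    using s unfolding e1 by (simp add: norm_vec_def L2_set_def real_sqrt_mult)
  have e3: "(\<chi> j. f j) \<bullet> u = (\<Sum>j\<in>J. u $ j * f j)" for f :: "'d \<Rightarrow> real"
  proof -
    have "(\<chi> j. f j) \<bullet> u = (\<Sum>j\<in>UNIV. u $ j * f j)" by (simp add: inner_vec_def mult.commute)
    also have "\<dots> = (\<Sum>j\<in>J. u $ j * f j)" by (rule sum.mono_neutral_right) (auto simp: J_def)
    finally show ?thesis .
  qed
  show "distributed (QQ s) lborel (\<lambda>f. (\<chi> j. f j) \<bullet> u) (\<lambda>x. ennreal (normal_density 0 (s * norm u) x))"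
    using S by (simp add: e2 e3)
qed simp

lemma sets_gaussian_vec[measurable_cong, simp]: "sets (gaussian_vec s) = sets borel"
  by (simp add: gaussian_vec_def)

lemma space_gaussian_vec[simp]: "space (gaussian_vec s) = UNIV"
  by (simp add: gaussian_vec_def)

lemma gauss_nn:
  assumes s: "0 < s" and u: "u \<noteq> (0::real^'d::finite)" and g[measurable]: "g \<in> borel_measurable borel"
  shows "(\<integral>\<^sup>+ z. g (z \<bullet> u) \<partial>(gaussian_vec s :: (real^'d) measure)) = (\<integral>\<^sup>+ x. ennreal (normal_density 0 (s * norm u) x) * g x \<partial>lborel)"
  by (rule distributed_nn_integral[OF gauss_law[OF s u], symmetric]) simp

lemma normal_second_nn: assumes s: "0 < s" shows
  "(\<integral>\<^sup>+ x. ennreal (normal_density 0 s x) * ennreal (x\<^sup>2) \<partial>lborel) = ennreal (s\<^sup>2)"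
proof -
  have hb: "has_bochner_integral lborel (\<lambda>x. normal_density 0 s x * x\<^sup>2) (s\<^sup>2)"
  proof -
    have e: "fact (2*1) / ((2 / s\<^sup>2)^1 * fact 1) = (s\<^sup>2::real)"
      by (cases "s = 0") (simp_all add: numeral_2_eq_2 field_simps)
    have h: "has_bochner_integral lborel (\<lambda>x. normal_density 0 s x * (x - 0)^(2*1)) (fact (2*1) / ((2 / s\<^sup>2)^1 * fact 1))"
      by (rule normal_moment_even) (use s in auto)
    show ?thesis by (rule has_bochner_integral_cong[OF refl _ e, THEN iffD1, OF _ h]) (simp add: power2_eq_square)
  qed
  have "(\<integral>\<^sup>+ x. ennreal (normal_density 0 s x) * ennreal (x\<^sup>2) \<partial>lborel) = (\<integral>\<^sup>+ x. ennreal (normal_density 0 s x * x\<^sup>2) \<partial>lborel)"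
    by (simp add: ennreal_mult)
  also have "\<dots> = ennreal (s\<^sup>2)"
    using hb s by (subst nn_integral_eq_integral) (auto simp: has_bochner_integral_iff)
  finally show ?thesis .
qed

lemma gauss_second:
  assumes s: "0 < s"
  shows "(\<integral>\<^sup>+ z. ennreal ((z \<bullet> w)\<^sup>2) \<partial>(gaussian_vec s :: (real^'d::finite) measure)) = ennreal (s\<^sup>2 * (norm w)\<^sup>2)"
proof (cases "w = 0")
  case True then show ?thesis by simp
next
  case False
  have "(\<integral>\<^sup>+ z. ennreal ((z \<bullet> w)\<^sup>2) \<partial>(gaussian_vec s :: (real^'d) measure))
      = (\<integral>\<^sup>+ x. ennreal (normal_density 0 (s * norm w) x) * ennreal (x\<^sup>2) \<partial>lborel)"
    by (rule gauss_nn[OF s False]) simp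
  also have "\<dots> = ennreal (s\<^sup>2 * (norm w)\<^sup>2)" using s False by (simp add: normal_second_nn power_mult_distrib)
  finally show ?thesis .
qed

lemma gauss_normsq:
  assumes s: "0 < s"
  shows "(\<integral>\<^sup>+ z. ennreal ((norm z)\<^sup>2) \<partial>(gaussian_vec s :: (real^'d::finite) measure)) = ennreal (real CARD('d) * s\<^sup>2)"
proof -
  have eq: "ennreal ((norm z)\<^sup>2) = (\<Sum>j\<in>UNIV. ennreal ((z \<bullet> axis j 1)\<^sup>2))" for z :: "real^'d"
  proof -
    have "(norm z)\<^sup>2 = (\<Sum>j\<in>UNIV. (z \<bullet> axis j 1)\<^sup>2)"
      by (simp add: norm_vec_def L2_set_def sum_nonneg inner_axis)
    then show ?thesis by simp
  qed
  have "(\<integral>\<^sup>+ z. ennreal ((norm z)\<^sup>2) \<partial>(gaussian_vec s :: (real^'d) measure))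
      = (\<Sum>j\<in>UNIV. \<integral>\<^sup>+ z. ennreal ((z \<bullet> axis j 1)\<^sup>2) \<partial>(gaussian_vec s :: (real^'d) measure))"
    unfolding eq by (rule nn_integral_sum) simp
  also have "\<dots> = (\<Sum>j\<in>(UNIV::'d set). ennreal (s\<^sup>2))"
    by (simp add: gauss_second[OF s])
  finally show ?thesis by (simp add: ennreal_of_nat_eq_real_of_nat ennreal_mult)
qed

lemma gauss_chaos:
  assumes s: "0 < s"
  shows "(\<integral>\<^sup>+ z2. (\<integral>\<^sup>+ z1. ennreal ((z1 \<bullet> z2)\<^sup>2) \<partial>gaussian_vec s) \<partial>(gaussian_vec s :: (real^'d::finite) measure))
     = ennreal (real CARD('d) * s ^ 4)"
proof -
  have "(\<integral>\<^sup>+ z2. (\<integral>\<^sup>+ z1. ennreal ((z1 \<bullet> z2)\<^sup>2) \<partial>gaussian_vec s) \<partial>(gaussian_vec s :: (real^'d) measure))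
      = (\<integral>\<^sup>+ z2. ennreal (s\<^sup>2) * ennreal ((norm z2)\<^sup>2) \<partial>(gaussian_vec s :: (real^'d) measure))"
    by (simp add: gauss_second[OF s] ennreal_mult)
  also have "\<dots> = ennreal (s\<^sup>2) * ennreal (real CARD('d) * s\<^sup>2)"
    by (subst nn_integral_cmult) (auto simp: gauss_normsq[OF s])
  also have "\<dots> = ennreal (real CARD('d) * s ^ 4)"
    using s by (subst ennreal_mult[symmetric]) (auto simp: power_def mult_ac)
  finally show ?thesis .
qed

lemma gauss_cross:
  fixes a b :: "real^'d::finite"
  assumes s: "0 < s" and na: "norm a = 1" and nb: "norm b = 1"
  shows "(\<integral>\<^sup>+ z2. (\<integral>\<^sup>+ z1. indicator {p::real. t \<le> \<bar>p\<bar>} (a \<bullet> z2 + z1 \<bullet> b) \<partial>gaussian_vec s) \<partial>(gaussian_vec s :: (real^'d::finite) measure))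
     = emeasure (gaussian_vec (sqrt (s\<^sup>2 + s\<^sup>2)) :: (real^'d) measure) {z. t \<le> \<bar>z \<bullet> a\<bar>}"
proof -
  define S where "S = {p::real. t \<le> \<bar>p\<bar>}"
  have S[measurable]: "S \<in> sets borel" unfolding S_def by measurable
  have a0: "a \<noteq> 0" and b0: "b \<noteq> 0" using na nb by auto
  let ?G = "gaussian_vec s :: (real^'d) measure"
  let ?\<phi> = "\<lambda>x. ennreal (normal_density 0 s x)"
  define H where "H = (\<lambda>w. \<integral>\<^sup>+ y. ?\<phi> y * indicator S (w + y) \<partial>lborel)"
  have H[measurable]: "H \<in> borel_measurable borel"
    unfolding H_def by (rule lborel.borel_measurable_nn_integral) measurable
  have inner: "(\<integral>\<^sup>+ z1. indicator S (a \<bullet> z2 + z1 \<bullet> b) \<partial>?G) = H (z2 \<bullet> a)" for z2 :: "real^'d"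
  proof -
    have "(\<integral>\<^sup>+ z1. indicator S (a \<bullet> z2 + z1 \<bullet> b) \<partial>?G) = (\<integral>\<^sup>+ y. ennreal (normal_density 0 (s * norm b) y) * indicator S (a \<bullet> z2 + y) \<partial>lborel)"
      by (rule gauss_nn[OF s b0, where g="\<lambda>y. indicator S (a \<bullet> z2 + y)"]) measurable
    then show ?thesis by (simp add: H_def nb inner_commute)
  qed
  have "(\<integral>\<^sup>+ z2. (\<integral>\<^sup>+ z1. indicator S (a \<bullet> z2 + z1 \<bullet> b) \<partial>?G) \<partial>?G) = (\<integral>\<^sup>+ z2. H (z2 \<bullet> a) \<partial>?G)"
    by (simp add: inner)
  also have "\<dots> = (\<integral>\<^sup>+ w. ?\<phi> w * H w \<partial>lborel)"
    using gauss_nn[OF s a0 H] by (simp add: na)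
  also have "\<dots> = (\<integral>\<^sup>+ w. (\<integral>\<^sup>+ y. ?\<phi> w * (?\<phi> y * indicator S (w + y)) \<partial>lborel) \<partial>lborel)"
    unfolding H_def by (rule nn_integral_cong, rule nn_integral_cmult[symmetric]) measurable
  finally have L: "(\<integral>\<^sup>+ z2. (\<integral>\<^sup>+ z1. indicator S (a \<bullet> z2 + z1 \<bullet> b) \<partial>?G) \<partial>?G) = (\<integral>\<^sup>+ w. (\<integral>\<^sup>+ y. ?\<phi> w * (?\<phi> y * indicator S (w + y)) \<partial>lborel) \<partial>lborel)" .
  let ?s' = "sqrt (s\<^sup>2 + s\<^sup>2)"
  have s': "0 < ?s'" using s by simp
  have "emeasure (gaussian_vec ?s' :: (real^'d) measure) {z. t \<le> \<bar>z \<bullet> a\<bar>} = (\<integral>\<^sup>+ z. indicator S (z \<bullet> a) \<partial>(gaussian_vec ?s' :: (real^'d) measure))"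
  proof -
    have mS: "{z::real^'d. t \<le> \<bar>z \<bullet> a\<bar>} \<in> sets borel" by measurable
    have "emeasure (gaussian_vec ?s' :: (real^'d) measure) {z. t \<le> \<bar>z \<bullet> a\<bar>} = (\<integral>\<^sup>+ z. indicator {z. t \<le> \<bar>z \<bullet> a\<bar>} z \<partial>(gaussian_vec ?s' :: (real^'d) measure))"
      by (rule nn_integral_indicator[symmetric]) (simp add: mS)
    also have "\<dots> = (\<integral>\<^sup>+ z. indicator S (z \<bullet> a) \<partial>(gaussian_vec ?s' :: (real^'d) measure))"
      by (rule nn_integral_cong) (simp add: S_def indicator_def)
    finally show ?thesis .
  qed
  also have "\<dots> = (\<integral>\<^sup>+ x. ennreal (normal_density 0 ?s' x) * indicator S x \<partial>lborel)"
    using gauss_nn[OF s' a0, of "indicator S"] by (simp add: na)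
  also have "\<dots> = (\<integral>\<^sup>+ x. (\<integral>\<^sup>+ w. ennreal (normal_density 0 s (x - w) * normal_density 0 s w) \<partial>lborel) * indicator S x \<partial>lborel)"
  proof -
    have cf: "(\<integral>\<^sup>+ w. ennreal (normal_density 0 s (x - w) * normal_density 0 s w) \<partial>lborel) = ennreal (normal_density 0 ?s' x)" for x
      using fun_cong[OF conv_normal_density_zero_mean[OF s s], of x] by simp
    show ?thesis by (simp only: cf)
  qed
  also have "\<dots> = (\<integral>\<^sup>+ x. (\<integral>\<^sup>+ w. ennreal (normal_density 0 s (x - w) * normal_density 0 s w) * indicator S x \<partial>lborel) \<partial>lborel)"
    by (rule nn_integral_cong, rule nn_integral_multc[symmetric]) measurable
  also have "\<dots> = (\<integral>\<^sup>+ w. (\<integral>\<^sup>+ x. ennreal (normal_density 0 s (x - w) * normal_density 0 s w) * indicator S x \<partial>lborel) \<partial>lborel)"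
    by (rule lborel_pair.Fubini') measurable
  also have "\<dots> = (\<integral>\<^sup>+ w. (\<integral>\<^sup>+ y. ?\<phi> w * (?\<phi> y * indicator S (w + y)) \<partial>lborel) \<partial>lborel)"
  proof (rule nn_integral_cong)
    fix w :: real
    have "(\<integral>\<^sup>+ x. ennreal (normal_density 0 s (x - w) * normal_density 0 s w) * indicator S x \<partial>lborel)
        = ennreal \<bar>1\<bar> * (\<integral>\<^sup>+ y. ennreal (normal_density 0 s ((w + 1 * y) - w) * normal_density 0 s w) * indicator S (w + 1 * y) \<partial>lborel)"
      by (rule nn_integral_real_affine) auto
    also have "\<dots> = (\<integral>\<^sup>+ y. ?\<phi> w * (?\<phi> y * indicator S (w + y)) \<partial>lborel)"
      by (auto intro!: nn_integral_cong simp: ennreal_mult mult_ac)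
    finally show "(\<integral>\<^sup>+ x. ennreal (normal_density 0 s (x - w) * normal_density 0 s w) * indicator S x \<partial>lborel)
        = (\<integral>\<^sup>+ y. ?\<phi> w * (?\<phi> y * indicator S (w + y)) \<partial>lborel)" .
  qed
  finally show ?thesis using L by (simp add: S_def)
qed

lemma fubini3:
  fixes K :: "nat \<Rightarrow> 'b measure" and F :: "'b \<Rightarrow> 'b \<Rightarrow> 'b \<Rightarrow> ennreal"
  assumes K: "\<And>i. sigma_finite_measure (K i)"
    and F: "(\<lambda>x. F (fst x) (fst (snd x)) (snd (snd x))) \<in> borel_measurable (K 0 \<Otimes>\<^sub>M (K 1 \<Otimes>\<^sub>M K 2))"
  shows "(\<integral>\<^sup>+ p. F (p 0) (p 1) (p 2) \<partial>PiM {0,1,2} K) = (\<integral>\<^sup>+ c. (\<integral>\<^sup>+ b. (\<integral>\<^sup>+ a. F a b c \<partial>K 0) \<partial>K 1) \<partial>K 2)"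
proof -
  interpret product_sigma_finite K using K by (simp add: product_sigma_finite_def)
  interpret K0: sigma_finite_measure "K 0" by (rule K)
  interpret K12: pair_sigma_finite "K 1" "K 2" using K by (simp add: pair_sigma_finite_def)
  have p3: "(\<lambda>p. (p 0, (p 1, p 2))) \<in> measurable (PiM {0,1,2} K) (K 0 \<Otimes>\<^sub>M (K 1 \<Otimes>\<^sub>M K 2))"
    by measurable
  have m1: "(\<lambda>p. F (p 0) (p 1) (p 2)) \<in> borel_measurable (PiM {0,1,2} K)"
    using measurable_comp[OF p3 F] by (simp add: comp_def)
  define G where "G = (\<lambda>b c. \<integral>\<^sup>+ a. F a b c \<partial>K 0)"
  have sw: "(\<lambda>x. (snd x, (fst (fst x), snd (fst x)))) \<in> measurable ((K 1 \<Otimes>\<^sub>M K 2) \<Otimes>\<^sub>M K 0) (K 0 \<Otimes>\<^sub>M (K 1 \<Otimes>\<^sub>M K 2))"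
    by measurable
  have Gm: "(\<lambda>x. G (fst x) (snd x)) \<in> borel_measurable (K 1 \<Otimes>\<^sub>M K 2)"
    unfolding G_def
    by (rule sigma_finite_measure.borel_measurable_nn_integral[OF K]) (use measurable_comp[OF sw F] in \<open>simp add: comp_def split_beta'\<close>)
  have Gm': "case_prod G \<in> borel_measurable (K 1 \<Otimes>\<^sub>M K 2)"
    using Gm by (simp add: split_beta')
  have "(\<integral>\<^sup>+ p. F (p 0) (p 1) (p 2) \<partial>PiM {0,1,2} K) = (\<integral>\<^sup>+ x. (\<integral>\<^sup>+ y. F ((x(0:=y)) 0) ((x(0:=y)) 1) ((x(0:=y)) 2) \<partial>K 0) \<partial>PiM {1,2} K)"
    by (rule product_nn_integral_insert[of "{1,2}" 0 "\<lambda>p. F (p 0) (p 1) (p 2)"]) (use m1 in simp_all)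
  also have "\<dots> = (\<integral>\<^sup>+ x. G (x 1) (x 2) \<partial>PiM {1,2} K)" by (simp add: G_def)
  also have "\<dots> = (\<integral>\<^sup>+ z. G (fst z) (snd z) \<partial>(K 1 \<Otimes>\<^sub>M K 2))"
    by (rule product_nn_integral_pair[OF Gm']) simp
  also have "\<dots> = (\<integral>\<^sup>+ c. (\<integral>\<^sup>+ b. G b c \<partial>K 1) \<partial>K 2)"
    by (subst K12.nn_integral_snd[symmetric]) (use Gm in simp_all)
  finally show ?thesis by (simp add: G_def)
qed

lemma preimage_family_eq:
  assumes g: "g \<in> measurable N N'" and h: "h \<in> measurable N' N" and hg: "\<And>x. h (g x) = x"
    and sN: "space N = UNIV" and sN': "space N' = UNIV"
  shows "{(\<lambda>\<omega>. g (X \<omega>)) -` A \<inter> S | A. A \<in> sets N'} = {X -` B \<inter> S | B. B \<in> sets N}"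
proof (intro equalityI subsetI)
  fix E assume "E \<in> {(\<lambda>\<omega>. g (X \<omega>)) -` A \<inter> S | A. A \<in> sets N'}"
  then obtain A where A: "A \<in> sets N'" "E = (\<lambda>\<omega>. g (X \<omega>)) -` A \<inter> S" by auto
  have "g -` A \<inter> space N \<in> sets N" using measurable_sets[OF g A(1)] .
  moreover have "E = X -` (g -` A \<inter> space N) \<inter> S" using A sN by auto
  ultimately show "E \<in> {X -` B \<inter> S | B. B \<in> sets N}" by blast
next
  fix E assume "E \<in> {X -` B \<inter> S | B. B \<in> sets N}"
  then obtain B where B: "B \<in> sets N" "E = X -` B \<inter> S" by auto
  have "h -` B \<inter> space N' \<in> sets N'" using measurable_sets[OF h B(1)] .
  moreover have "E = (\<lambda>\<omega>. g (X \<omega>)) -` (h -` B \<inter> space N') \<inter> S" using B sN' hg by auto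
  ultimately show "E \<in> {(\<lambda>\<omega>. g (X \<omega>)) -` A \<inter> S | A. A \<in> sets N'}" by blast
qed

lemma joint:
  fixes M :: "'a measure" and x1 x2 e1 e2 :: "'a \<Rightarrow> real^'d::finite"
    and F :: "real^'d \<Rightarrow> real^'d \<Rightarrow> ((real^'d) \<times> (real^'d)) \<Rightarrow> ennreal"
  assumes M: "prob_space M"
    and x1_rv: "x1 \<in> borel_measurable M" and x2_rv: "x2 \<in> borel_measurable M"
    and e1_gauss: "distributed M lborel e1 (\<lambda>z. ennreal (gauss_density \<sigma> z))"
    and e2_gauss: "distributed M lborel e2 (\<lambda>z. ennreal (gauss_density \<sigma> z))"
    and indep: "prob_space.indep_sets M (\<lambda>i::nat. if i = 0 then {e1 -` A \<inter> space M | A. A \<in> sets borel}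
                        else if i = 1 then {e2 -` A \<inter> space M | A. A \<in> sets borel}
                        else {(\<lambda>\<omega>. (x1 \<omega>, x2 \<omega>)) -` A \<inter> space M | A. A \<in> sets borel}) {0, 1, 2}"
    and Fm: "(\<lambda>x. F (fst x) (fst (snd x)) (snd (snd x))) \<in> borel_measurable (borel \<Otimes>\<^sub>M (borel \<Otimes>\<^sub>M borel))"
  shows "(\<integral>\<^sup>+ \<omega>. F (e1 \<omega>) (e2 \<omega>) (x1 \<omega>, x2 \<omega>) \<partial>M)
       = (\<integral>\<^sup>+ c. (\<integral>\<^sup>+ b. (\<integral>\<^sup>+ a. F a b c \<partial>gaussian_vec \<sigma>) \<partial>gaussian_vec \<sigma>) \<partial>distr M borel (\<lambda>\<omega>. (x1 \<omega>, x2 \<omega>)))"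
proof -
  interpret prob_space M by (rule M)
  have e1m[measurable]: "e1 \<in> borel_measurable M"
    using distributed_measurable[OF e1_gauss] by (simp add: measurable_lborel2)
  have e2m[measurable]: "e2 \<in> borel_measurable M"
    using distributed_measurable[OF e2_gauss] by (simp add: measurable_lborel2)
  note [measurable] = x1_rv x2_rv
  have G1: "distr M borel e1 = gaussian_vec \<sigma>"
  proof -
    have "distr M borel e1 = distr M lborel e1" by (rule distr_cong) auto
    also have "\<dots> = gaussian_vec \<sigma>" using e1_gauss by (simp add: distributed_def gaussian_vec_def)
    finally show ?thesis .
  qed
  have G2: "distr M borel e2 = gaussian_vec \<sigma>"
  proof -
    have "distr M borel e2 = distr M lborel e2" by (rule distr_cong) auto
    also have "\<dots> = gaussian_vec \<sigma>" using e2_gauss by (simp add: distributed_def gaussian_vec_def)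
    finally show ?thesis .
  qed
  define Z :: "nat \<Rightarrow> 'a \<Rightarrow> (real^'d) \<times> (real^'d)" where
    "Z i \<omega> = (if i = 0 then (e1 \<omega>, 0) else if i = 1 then (e2 \<omega>, 0) else (x1 \<omega>, x2 \<omega>))" for i \<omega>
  have Zm[measurable]: "Z i \<in> borel_measurable M" for i unfolding Z_def borel_prod[symmetric] by measurable
  have gm: "(\<lambda>z::real^'d. (z, 0::real^'d)) \<in> measurable borel borel" unfolding borel_prod[symmetric] by measurable
  have hm: "(fst :: (real^'d) \<times> (real^'d) \<Rightarrow> real^'d) \<in> measurable borel borel" unfolding borel_prod[symmetric] by measurable
  note hm' [measurable] = hm
  have fam: "{Z i -` A \<inter> space M | A. A \<in> sets borel} =
      (if i = 0 then {e1 -` A \<inter> space M | A. A \<in> sets borel}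
       else if i = 1 then {e2 -` A \<inter> space M | A. A \<in> sets borel}
       else {(\<lambda>\<omega>. (x1 \<omega>, x2 \<omega>)) -` A \<inter> space M | A. A \<in> sets borel})" for i
  proof -
    have Z0: "Z 0 = (\<lambda>\<omega>. (\<lambda>z. (z, 0::real^'d)) (e1 \<omega>))" by (simp add: Z_def fun_eq_iff)
    have Z1: "Z (Suc 0) = (\<lambda>\<omega>. (\<lambda>z. (z, 0::real^'d)) (e2 \<omega>))" by (simp add: Z_def fun_eq_iff)
    show ?thesis
    proof (cases "i = 0")
      case True then show ?thesis
        using preimage_family_eq[OF gm hm, of e1 "space M"] by (simp add: Z0)
    next
      case False
      show ?thesis
      proof (cases "i = 1")
        case True then show ?thesis using False
          using preimage_family_eq[OF gm hm, of e2 "space M"] by (simp add: Z1)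
      next
        case False2: False
        have "Z i = (\<lambda>\<omega>. (x1 \<omega>, x2 \<omega>))" using False False2 by (simp add: Z_def fun_eq_iff)
        then show ?thesis using False False2 by simp
      qed
    qed
  qed
  have ind: "indep_vars (\<lambda>_. borel) Z {0,1,2}"
    unfolding indep_vars_def2
  proof
    show "\<forall>i\<in>{0,1,2}. random_variable borel (Z i)" by simp
    show "indep_sets (\<lambda>i. {Z i -` A \<inter> space M | A. A \<in> sets borel}) {0, 1, 2}"
      by (rule indep_sets_cong[THEN iffD2, OF refl _ indep]) (simp only: fam)
  qed
  define K where "K i = distr M borel (Z i)" for i
  have K_sets[measurable_cong, simp]: "sets (K i) = sets borel" for i by (simp add: K_def)
  have K_sf: "sigma_finite_measure (K i)" for i
    unfolding K_def by (rule prob_space_imp_sigma_finite, rule prob_space_distr) simp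
  have L: "distr M (PiM {0,1,2} (\<lambda>_. borel)) (\<lambda>\<omega>. \<lambda>i\<in>{0,1,2}. Z i \<omega>) = PiM {0,1,2} K"
    using ind unfolding K_def by (subst (asm) indep_vars_iff_distr_eq_PiM) auto
  define F' where "F' p = F (fst (p (0::nat))) (fst (p 1)) (p 2)" for p :: "nat \<Rightarrow> (real^'d) \<times> (real^'d)"
  have Fm3: "(\<lambda>x. F (fst (fst x)) (fst (fst (snd x))) (snd (snd x))) \<in> borel_measurable (K 0 \<Otimes>\<^sub>M (K 1 \<Otimes>\<^sub>M K 2))"
  proof -
    have m: "(\<lambda>x::((real^'d) \<times> (real^'d)) \<times> ((real^'d) \<times> (real^'d)) \<times> ((real^'d) \<times> (real^'d)). (fst (fst x), (fst (fst (snd x)), snd (snd x))))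
        \<in> measurable (K 0 \<Otimes>\<^sub>M (K 1 \<Otimes>\<^sub>M K 2)) (borel \<Otimes>\<^sub>M (borel \<Otimes>\<^sub>M borel))" by measurable
    show ?thesis using measurable_comp[OF m Fm] by (simp add: comp_def)
  qed
  have F'm: "F' \<in> borel_measurable (PiM {0,1,2} (\<lambda>_. borel))"
  proof -
    have m: "(\<lambda>p::nat \<Rightarrow> (real^'d) \<times> (real^'d). (fst (p 0), (fst (p 1), p 2))) \<in> measurable (PiM {0,1,2} (\<lambda>_. borel)) (borel \<Otimes>\<^sub>M (borel \<Otimes>\<^sub>M borel))"
      by measurable
    have e: "F' = (\<lambda>p. F (fst (p 0)) (fst (p 1)) (p 2))" by (rule ext) (simp add: F'_def)
    show ?thesis using measurable_comp[OF m Fm] unfolding e by (simp add: comp_def)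
  qed
  have Zv: "(\<lambda>\<omega>. \<lambda>i\<in>{0,1,2}. Z i \<omega>) \<in> measurable M (PiM {0,1,2} (\<lambda>_. borel))"
    by (rule measurable_restrict) simp
  have "(\<integral>\<^sup>+ \<omega>. F (e1 \<omega>) (e2 \<omega>) (x1 \<omega>, x2 \<omega>) \<partial>M) = (\<integral>\<^sup>+ \<omega>. F' (\<lambda>i\<in>{0,1,2}. Z i \<omega>) \<partial>M)"
    by (simp add: F'_def Z_def)
  also have "\<dots> = (\<integral>\<^sup>+ p. F' p \<partial>distr M (PiM {0,1,2} (\<lambda>_. borel)) (\<lambda>\<omega>. \<lambda>i\<in>{0,1,2}. Z i \<omega>))"
    by (subst nn_integral_distr) (use Zv F'm in simp_all)
  also have "\<dots> = (\<integral>\<^sup>+ p. F (fst (p 0)) (fst (p 1)) (p 2) \<partial>PiM {0,1,2} K)"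
    unfolding L by (simp add: F'_def)
  also have "\<dots> = (\<integral>\<^sup>+ c. (\<integral>\<^sup>+ b. (\<integral>\<^sup>+ a. F (fst a) (fst b) c \<partial>K 0) \<partial>K 1) \<partial>K 2)"
    by (rule fubini3[OF K_sf, where F="\<lambda>a b c. F (fst a) (fst b) c", OF Fm3])
  also have "\<dots> = (\<integral>\<^sup>+ c. (\<integral>\<^sup>+ b. (\<integral>\<^sup>+ a. F a b c \<partial>gaussian_vec \<sigma>) \<partial>gaussian_vec \<sigma>) \<partial>distr M borel (\<lambda>\<omega>. (x1 \<omega>, x2 \<omega>)))"
  proof -
    have K0: "K 0 = distr (gaussian_vec \<sigma>) borel (\<lambda>z. (z, 0))"
      unfolding K_def G1[symmetric] by (subst distr_distr) (auto simp: Z_def comp_def intro!: distr_cong)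
    have K1: "K 1 = distr (gaussian_vec \<sigma>) borel (\<lambda>z. (z, 0))"
      unfolding K_def G2[symmetric] by (subst distr_distr) (auto simp: Z_def comp_def intro!: distr_cong)
    have K2: "K 2 = distr M borel (\<lambda>\<omega>. (x1 \<omega>, x2 \<omega>))"
      unfolding K_def by (rule distr_cong) (auto simp: Z_def)
    have in1: "(\<integral>\<^sup>+ a. F (fst a) b' c \<partial>K 0) = (\<integral>\<^sup>+ a. F a b' c \<partial>gaussian_vec \<sigma>)" for b' c
    proof -
      have m: "(\<lambda>a::real^'d. (a, (b', c))) \<in> measurable borel (borel \<Otimes>\<^sub>M (borel \<Otimes>\<^sub>M borel))" by measurable
      have "(\<lambda>a::(real^'d)\<times>(real^'d). F (fst a) b' c) \<in> borel_measurable borel"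
        using measurable_comp[OF measurable_comp[OF hm m] Fm] by (simp add: comp_def)
      then show ?thesis unfolding K0 by (subst nn_integral_distr) auto
    qed
    have in2: "(\<integral>\<^sup>+ b. H (fst b) \<partial>K 1) = (\<integral>\<^sup>+ b. H b \<partial>gaussian_vec \<sigma>)" if H: "H \<in> borel_measurable borel" for H :: "real^'d \<Rightarrow> ennreal"
      unfolding K1 using H by (subst nn_integral_distr) auto
    have Hm: "(\<lambda>b. \<integral>\<^sup>+ a. F a b c \<partial>gaussian_vec \<sigma>) \<in> borel_measurable borel" for c
    proof -
      interpret G: sigma_finite_measure "gaussian_vec \<sigma> :: (real^'d) measure"
        unfolding G1[symmetric] by (rule prob_space_imp_sigma_finite, rule prob_space_distr) simp
      have m: "(\<lambda>x::(real^'d) \<times> (real^'d). (snd x, (fst x, c))) \<in> measurable (borel \<Otimes>\<^sub>M gaussian_vec \<sigma>) (borel \<Otimes>\<^sub>M (borel \<Otimes>\<^sub>M borel))"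
        by measurable
      show ?thesis
        by (rule G.borel_measurable_nn_integral) (use measurable_comp[OF m Fm] in \<open>simp add: comp_def split_beta'\<close>)
    qed
    show ?thesis unfolding K2 in1 by (simp only: in2[OF Hm])
  qed
  finally show ?thesis .
qed

lemma gauss_prob: assumes s: "0 < s" shows "prob_space (gaussian_vec s :: (real^'d::finite) measure)"
  unfolding gaussian_vec_distr[OF s] by (rule prob_space.prob_space_distr[OF QQ_prob[OF s]]) simp

lemma fst_vec_meas[measurable]: "(fst :: (real^'d::finite) \<times> (real^'d) \<Rightarrow> real^'d) \<in> measurable borel borel"
  unfolding borel_prod[symmetric] by measurable
lemma snd_vec_meas[measurable]: "(snd :: (real^'d::finite) \<times> (real^'d) \<Rightarrow> real^'d) \<in> measurable borel borel"
  unfolding borel_prod[symmetric] by measurable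

definition nz :: "real^'d::finite \<Rightarrow> real^'d" where
  "nz a = (if norm a = 1 then a else axis undefined 1)"

lemma nz_norm[simp]: "norm (nz a) = 1" by (simp add: nz_def)
lemma nz_id: "norm a = 1 \<Longrightarrow> nz a = a" by (simp add: nz_def)
lemma nz_meas[measurable]: "nz \<in> borel_measurable borel"
  unfolding nz_def by measurable

lemma PA:
  fixes M :: "'a measure" and x1 x2 e1 e2 :: "'a \<Rightarrow> real^'d::finite" and c \<sigma> \<delta> :: real
  assumes c_tail: "\<forall>s>0. \<forall>y::real^'d. y \<noteq> 0 \<longrightarrow> (\<forall>t>0.
          measure (gaussian_vec s) {z. \<bar>z \<bullet> y\<bar> \<ge> t} \<le> exp (1 - c * t\<^sup>2 / (s\<^sup>2 * (norm y)\<^sup>2)))"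
    and M: "prob_space M" and sigma_pos: "\<sigma> > 0"
    and x1_rv: "x1 \<in> borel_measurable M" and x2_rv: "x2 \<in> borel_measurable M"
    and x1_norm: "\<forall>\<omega>\<in>space M. norm (x1 \<omega>) = 1"
    and x2_norm: "\<forall>\<omega>\<in>space M. norm (x2 \<omega>) = 1"
    and e1_gauss: "distributed M lborel e1 (\<lambda>z. ennreal (gauss_density \<sigma> z))"
    and e2_gauss: "distributed M lborel e2 (\<lambda>z. ennreal (gauss_density \<sigma> z))"
    and indep: "prob_space.indep_sets M (\<lambda>i::nat. if i = 0 then {e1 -` A \<inter> space M | A. A \<in> sets borel}
                        else if i = 1 then {e2 -` A \<inter> space M | A. A \<in> sets borel}
                        else {(\<lambda>\<omega>. (x1 \<omega>, x2 \<omega>)) -` A \<inter> space M | A. A \<in> sets borel}) {0, 1, 2}"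
    and delta_pos: "\<delta> > 0"
  shows "measure M {\<omega>\<in>space M. sqrt 2 * \<delta> \<le> \<bar>x1 \<omega> \<bullet> e2 \<omega> + e1 \<omega> \<bullet> x2 \<omega>\<bar>} \<le> exp (1 - c * \<delta>\<^sup>2 / \<sigma>\<^sup>2)"
proof -
  interpret prob_space M by (rule M)
  have e1m[measurable]: "e1 \<in> borel_measurable M"
    using distributed_measurable[OF e1_gauss] by (simp add: measurable_lborel2)
  have e2m[measurable]: "e2 \<in> borel_measurable M"
    using distributed_measurable[OF e2_gauss] by (simp add: measurable_lborel2)
  note [measurable] = x1_rv x2_rv
  define t where "t = sqrt 2 * \<delta>"
  have t: "0 < t" using delta_pos by (simp add: t_def)
  define S where "S = {q::real. t \<le> \<bar>q\<bar>}"
  have S[measurable]: "S \<in> sets borel" unfolding S_def by measurable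
  define F where "F z1 z2 c = (indicator S (nz (fst c) \<bullet> z2 + z1 \<bullet> nz (snd c)) :: ennreal)"
    for z1 z2 :: "real^'d" and c :: "(real^'d) \<times> (real^'d)"
  have Fm: "(\<lambda>x. F (fst x) (fst (snd x)) (snd (snd x))) \<in> borel_measurable (borel \<Otimes>\<^sub>M (borel \<Otimes>\<^sub>M borel))"
    unfolding F_def by measurable
  define A where "A = {\<omega>\<in>space M. t \<le> \<bar>x1 \<omega> \<bullet> e2 \<omega> + e1 \<omega> \<bullet> x2 \<omega>\<bar>}"
  have Am: "A \<in> sets M" unfolding A_def by measurable
  let ?s' = "sqrt (\<sigma>\<^sup>2 + \<sigma>\<^sup>2)"
  have s': "0 < ?s'" using sigma_pos by simp
  interpret G': prob_space "gaussian_vec ?s' :: (real^'d) measure" by (rule gauss_prob[OF s'])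
  let ?E = "exp (1 - c * \<delta>\<^sup>2 / \<sigma>\<^sup>2)"
  have "emeasure M A = (\<integral>\<^sup>+ \<omega>. indicator A \<omega> \<partial>M)" using Am by simp
  also have "\<dots> = (\<integral>\<^sup>+ \<omega>. F (e1 \<omega>) (e2 \<omega>) (x1 \<omega>, x2 \<omega>) \<partial>M)"
    by (rule nn_integral_cong) (use x1_norm x2_norm in \<open>simp add: F_def A_def S_def nz_id indicator_def\<close>)
  also have "\<dots> = (\<integral>\<^sup>+ c. (\<integral>\<^sup>+ b. (\<integral>\<^sup>+ a. F a b c \<partial>gaussian_vec \<sigma>) \<partial>gaussian_vec \<sigma>) \<partial>distr M borel (\<lambda>\<omega>. (x1 \<omega>, x2 \<omega>)))"
    by (rule joint[OF M x1_rv x2_rv e1_gauss e2_gauss indep Fm])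
  also have "\<dots> \<le> (\<integral>\<^sup>+ c. ennreal ?E \<partial>distr M borel (\<lambda>\<omega>. (x1 \<omega>, x2 \<omega>)))"
  proof (rule nn_integral_mono)
    fix cc :: "(real^'d) \<times> (real^'d)"
    have "(\<integral>\<^sup>+ b. (\<integral>\<^sup>+ a. F a b cc \<partial>gaussian_vec \<sigma>) \<partial>(gaussian_vec \<sigma> :: (real^'d) measure))
        = emeasure (gaussian_vec ?s' :: (real^'d) measure) {z. t \<le> \<bar>z \<bullet> nz (fst cc)\<bar>}"
      unfolding F_def S_def by (rule gauss_cross[OF sigma_pos]) simp_all
    also have "\<dots> = ennreal (measure (gaussian_vec ?s' :: (real^'d) measure) {z. t \<le> \<bar>z \<bullet> nz (fst cc)\<bar>})"
      by (rule G'.emeasure_eq_measure)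
    also have "\<dots> \<le> ennreal (exp (1 - c * t\<^sup>2 / (?s'\<^sup>2 * (norm (nz (fst cc)))\<^sup>2)))"
    proof (rule ennreal_leI)
      have "nz (fst cc) \<noteq> 0" using nz_norm[of "fst cc"] by (metis norm_zero zero_neq_one)
      then show "measure (gaussian_vec ?s' :: (real^'d) measure) {z. t \<le> \<bar>z \<bullet> nz (fst cc)\<bar>} \<le> exp (1 - c * t\<^sup>2 / (?s'\<^sup>2 * (norm (nz (fst cc)))\<^sup>2))"
        using c_tail s' t by blast
    qed
    also have "exp (1 - c * t\<^sup>2 / (?s'\<^sup>2 * (norm (nz (fst cc)))\<^sup>2)) = ?E"
      using sigma_pos by (simp add: t_def power_mult_distrib)
    finally show "(\<integral>\<^sup>+ b. (\<integral>\<^sup>+ a. F a b cc \<partial>gaussian_vec \<sigma>) \<partial>(gaussian_vec \<sigma> :: (real^'d) measure)) \<le> ennreal ?E" .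
  qed
  also have "\<dots> = ennreal ?E"
  proof -
    interpret L: prob_space "distr M borel (\<lambda>\<omega>. (x1 \<omega>, x2 \<omega>)) :: ((real^'d) \<times> (real^'d)) measure"
      by (rule prob_space_distr) (simp add: borel_prod[symmetric])
    have "emeasure (distr M borel (\<lambda>\<omega>. (x1 \<omega>, x2 \<omega>)) :: ((real^'d) \<times> (real^'d)) measure) UNIV = 1"
      using L.emeasure_space_1 by simp
    then show ?thesis by simp
  qed
  finally have "emeasure M A \<le> ennreal ?E" .
  then have "measure M A \<le> ?E" by (simp add: emeasure_eq_measure)
  then show ?thesis by (simp add: A_def t_def)
qed

lemma sqrt2_le: "sqrt 2 \<le> 3/2"
proof -
  have "sqrt 2 \<le> sqrt ((3/2)^2)" by (rule real_sqrt_le_mono) (simp add: power2_eq_square)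
  then show ?thesis by simp
qed

lemma PB:
  fixes M :: "'a measure" and x1 x2 e1 e2 :: "'a \<Rightarrow> real^'d::finite" and \<sigma> \<delta> :: real
  assumes M: "prob_space M" and sigma_pos: "\<sigma> > 0"
    and x1_rv: "x1 \<in> borel_measurable M" and x2_rv: "x2 \<in> borel_measurable M"
    and e1_gauss: "distributed M lborel e1 (\<lambda>z. ennreal (gauss_density \<sigma> z))"
    and e2_gauss: "distributed M lborel e2 (\<lambda>z. ennreal (gauss_density \<sigma> z))"
    and indep: "prob_space.indep_sets M (\<lambda>i::nat. if i = 0 then {e1 -` A \<inter> space M | A. A \<in> sets borel}
                        else if i = 1 then {e2 -` A \<inter> space M | A. A \<in> sets borel}
                        else {(\<lambda>\<omega>. (x1 \<omega>, x2 \<omega>)) -` A \<inter> space M | A. A \<in> sets borel}) {0, 1, 2}"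
    and delta_pos: "\<delta> > 0"
  shows "measure M {\<omega>\<in>space M. (3 - sqrt 2) * \<delta> \<le> \<bar>e1 \<omega> \<bullet> e2 \<omega>\<bar>} \<le> real CARD('d) * \<sigma> ^ 4 / (2 * \<delta>\<^sup>2)"
proof -
  interpret prob_space M by (rule M)
  have e1m[measurable]: "e1 \<in> borel_measurable M"
    using distributed_measurable[OF e1_gauss] by (simp add: measurable_lborel2)
  have e2m[measurable]: "e2 \<in> borel_measurable M"
    using distributed_measurable[OF e2_gauss] by (simp add: measurable_lborel2)
  note [measurable] = x1_rv x2_rv
  define t where "t = (3 - sqrt 2) * \<delta>"
  have s2: "sqrt 2 \<le> 3/2" by (rule sqrt2_le)
  have t: "0 < t" using delta_pos s2 by (simp add: t_def)
  have t2: "2 * \<delta>\<^sup>2 \<le> t\<^sup>2"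
  proof -
    have "3/2 \<le> 3 - sqrt 2" using s2 by simp
    then have "(3/2)^2 \<le> (3 - sqrt 2)^2" by (rule power_mono) simp
    then have "2 \<le> (3 - sqrt 2)^2" by (simp add: power2_eq_square)
    then have "2 * \<delta>\<^sup>2 \<le> (3 - sqrt 2)^2 * \<delta>\<^sup>2" by (rule mult_right_mono) simp
    then show ?thesis by (simp add: t_def power_mult_distrib)
  qed
  define B where "B = {\<omega>\<in>space M. t \<le> \<bar>e1 \<omega> \<bullet> e2 \<omega>\<bar>}"
  have Bm: "B \<in> sets M" unfolding B_def by measurable
  define F where "F z1 z2 c = ennreal ((z1 \<bullet> z2)\<^sup>2)" for z1 z2 :: "real^'d" and c :: "(real^'d) \<times> (real^'d)"
  have Fm: "(\<lambda>x. F (fst x) (fst (snd x)) (snd (snd x))) \<in> borel_measurable (borel \<Otimes>\<^sub>M (borel \<Otimes>\<^sub>M borel))"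
    unfolding F_def by measurable
  have "emeasure M B = (\<integral>\<^sup>+ \<omega>. indicator B \<omega> \<partial>M)" using Bm by simp
  also have "\<dots> \<le> (\<integral>\<^sup>+ \<omega>. ennreal (1 / t\<^sup>2) * F (e1 \<omega>) (e2 \<omega>) (x1 \<omega>, x2 \<omega>) \<partial>M)"
  proof (rule nn_integral_mono)
    fix \<omega> show "indicator B \<omega> \<le> ennreal (1 / t\<^sup>2) * F (e1 \<omega>) (e2 \<omega>) (x1 \<omega>, x2 \<omega>)"
    proof (cases "\<omega> \<in> B")
      case True
      then have "t \<le> \<bar>e1 \<omega> \<bullet> e2 \<omega>\<bar>" by (simp add: B_def)
      then have "t\<^sup>2 \<le> \<bar>e1 \<omega> \<bullet> e2 \<omega>\<bar>\<^sup>2" using t by (intro power_mono) auto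
      then have "1 \<le> (1 / t\<^sup>2) * (e1 \<omega> \<bullet> e2 \<omega>)\<^sup>2" using t by (simp add: field_simps)
      then have le: "ennreal 1 \<le> ennreal ((1 / t\<^sup>2) * (e1 \<omega> \<bullet> e2 \<omega>)\<^sup>2)" by (rule ennreal_leI)
      have eq:  "ennreal ((1 / t\<^sup>2) * (e1 \<omega> \<bullet> e2 \<omega>)\<^sup>2) = ennreal (1 / t\<^sup>2) * ennreal ((e1 \<omega> \<bullet> e2 \<omega>)\<^sup>2)"
        by (rule ennreal_mult) auto
      have ind1: "indicator B \<omega> = (1::ennreal)" using True by simp
      show ?thesis using le unfolding eq ennreal_1 F_def ind1 by assumption
    qed simp
  qed
  also have "\<dots> = ennreal (1 / t\<^sup>2) * (\<integral>\<^sup>+ \<omega>. F (e1 \<omega>) (e2 \<omega>) (x1 \<omega>, x2 \<omega>) \<partial>M)"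
    by (rule nn_integral_cmult) (simp add: F_def)
  also have "(\<integral>\<^sup>+ \<omega>. F (e1 \<omega>) (e2 \<omega>) (x1 \<omega>, x2 \<omega>) \<partial>M)
      = (\<integral>\<^sup>+ c. (\<integral>\<^sup>+ b. (\<integral>\<^sup>+ a. F a b c \<partial>gaussian_vec \<sigma>) \<partial>gaussian_vec \<sigma>) \<partial>distr M borel (\<lambda>\<omega>. (x1 \<omega>, x2 \<omega>)))"
    by (rule joint[OF M x1_rv x2_rv e1_gauss e2_gauss indep Fm])
  also have "\<dots> = (\<integral>\<^sup>+ c. ennreal (real CARD('d) * \<sigma> ^ 4) \<partial>distr M borel (\<lambda>\<omega>. (x1 \<omega>, x2 \<omega>)))"
    unfolding F_def by (simp only: gauss_chaos[OF sigma_pos])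
  also have "\<dots> = ennreal (real CARD('d) * \<sigma> ^ 4)"
  proof -
    interpret L: prob_space "distr M borel (\<lambda>\<omega>. (x1 \<omega>, x2 \<omega>)) :: ((real^'d) \<times> (real^'d)) measure"
      by (rule prob_space_distr) (simp add: borel_prod[symmetric])
    have "emeasure (distr M borel (\<lambda>\<omega>. (x1 \<omega>, x2 \<omega>)) :: ((real^'d) \<times> (real^'d)) measure) UNIV = 1"
      using L.emeasure_space_1 by simp
    then show ?thesis by simp
  qed
  also have "ennreal (1 / t\<^sup>2) * ennreal (real CARD('d) * \<sigma> ^ 4) = ennreal (real CARD('d) * \<sigma> ^ 4 / t\<^sup>2)"
    using t by (subst ennreal_mult[symmetric]) auto
  finally have "measure M B \<le> real CARD('d) * \<sigma> ^ 4 / t\<^sup>2"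
    using t by (simp add: emeasure_eq_measure)
  also have "\<dots> \<le> real CARD('d) * \<sigma> ^ 4 / (2 * \<delta>\<^sup>2)"
    by (rule divide_left_mono[OF t2]) (use delta_pos t in auto)
  finally show ?thesis by (simp add: B_def t_def)
qed

theorem lemma4:
  fixes M :: "'a measure"
    and x1 x2 e1 e2 :: "'a \<Rightarrow> real^'d"
    and c \<sigma> v p \<delta> :: real
  assumes c_pos: "c > 0"
    and c_tail: "\<forall>s>0. \<forall>y::real^'d. y \<noteq> 0 \<longrightarrow> (\<forall>t>0.
          measure (gaussian_vec s) {z. \<bar>z \<bullet> y\<bar> \<ge> t} \<le> exp (1 - c * t\<^sup>2 / (s\<^sup>2 * (norm y)\<^sup>2)))"
    and M: "prob_space M"
    and sigma_pos: "\<sigma> > 0"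
    and x1_rv: "x1 \<in> borel_measurable M" and x2_rv: "x2 \<in> borel_measurable M"
    and x1_norm: "\<forall>\<omega>\<in>space M. norm (x1 \<omega>) = 1"
    and x2_norm: "\<forall>\<omega>\<in>space M. norm (x2 \<omega>) = 1"
    and e1_gauss: "distributed M lborel e1 (\<lambda>z. ennreal (gauss_density \<sigma> z))"
    and e2_gauss: "distributed M lborel e2 (\<lambda>z. ennreal (gauss_density \<sigma> z))"
    and indep: "prob_space.indep_sets M (\<lambda>i::nat. if i = 0 then {e1 -` A \<inter> space M | A. A \<in> sets borel}
                        else if i = 1 then {e2 -` A \<inter> space M | A. A \<in> sets borel}
                        else {(\<lambda>\<omega>. (x1 \<omega>, x2 \<omega>)) -` A \<inter> space M | A. A \<in> sets borel}) {0, 1, 2}"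
    and p: "0 \<le> p" "p \<le> 1"
    and delta_pos: "\<delta> > 0"
  shows "(measure M {\<omega>\<in>space M. x1 \<omega> \<bullet> x2 \<omega> > v} \<ge> p \<longrightarrow>
            measure M {\<omega>\<in>space M. (x1 \<omega> + e1 \<omega>) \<bullet> (x2 \<omega> + e2 \<omega>) > v - 3 * \<delta>}
              \<ge> p - exp (1 - c * \<delta>\<^sup>2 / \<sigma>\<^sup>2) - real CARD('d) * \<sigma> ^ 4 / (2 * \<delta>\<^sup>2))
       \<and> (measure M {\<omega>\<in>space M. x1 \<omega> \<bullet> x2 \<omega> < v} \<ge> p \<longrightarrow>
            measure M {\<omega>\<in>space M. (x1 \<omega> + e1 \<omega>) \<bullet> (x2 \<omega> + e2 \<omega>) < v + 3 * \<delta>}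
              \<ge> p - exp (1 - c * \<delta>\<^sup>2 / \<sigma>\<^sup>2) - real CARD('d) * \<sigma> ^ 4 / (2 * \<delta>\<^sup>2))"
proof -
  interpret prob_space M by (rule M)
  have e1m[measurable]: "e1 \<in> borel_measurable M"
    using distributed_measurable[OF e1_gauss] by (simp add: measurable_lborel2)
  have e2m[measurable]: "e2 \<in> borel_measurable M"
    using distributed_measurable[OF e2_gauss] by (simp add: measurable_lborel2)
  note [measurable] = x1_rv x2_rv
  define A where "A = {\<omega>\<in>space M. sqrt 2 * \<delta> \<le> \<bar>x1 \<omega> \<bullet> e2 \<omega> + e1 \<omega> \<bullet> x2 \<omega>\<bar>}"
  define B where "B = {\<omega>\<in>space M. (3 - sqrt 2) * \<delta> \<le> \<bar>e1 \<omega> \<bullet> e2 \<omega>\<bar>}"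
  have Am[measurable]: "A \<in> sets M" unfolding A_def by measurable
  have Bm[measurable]: "B \<in> sets M" unfolding B_def by measurable
  have PA': "measure M A \<le> exp (1 - c * \<delta>\<^sup>2 / \<sigma>\<^sup>2)"
    unfolding A_def by (rule PA[OF c_tail M sigma_pos x1_rv x2_rv x1_norm x2_norm e1_gauss e2_gauss indep delta_pos])
  have PB': "measure M B \<le> real CARD('d) * \<sigma> ^ 4 / (2 * \<delta>\<^sup>2)"
    unfolding B_def by (rule PB[OF M sigma_pos x1_rv x2_rv e1_gauss e2_gauss indep delta_pos])
  have yy: "(x1 \<omega> + e1 \<omega>) \<bullet> (x2 \<omega> + e2 \<omega>) = x1 \<omega> \<bullet> x2 \<omega> + (x1 \<omega> \<bullet> e2 \<omega> + e1 \<omega> \<bullet> x2 \<omega>) + e1 \<omega> \<bullet> e2 \<omega>" for \<omega>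
    by (simp add: inner_add_left inner_add_right inner_commute)
  have small: "\<bar>(x1 \<omega> \<bullet> e2 \<omega> + e1 \<omega> \<bullet> x2 \<omega>) + e1 \<omega> \<bullet> e2 \<omega>\<bar> < 3 * \<delta>"
    if "\<omega> \<in> space M" "\<omega> \<notin> A" "\<omega> \<notin> B" for \<omega>
  proof -
    have a: "\<bar>x1 \<omega> \<bullet> e2 \<omega> + e1 \<omega> \<bullet> x2 \<omega>\<bar> < sqrt 2 * \<delta>" using that by (auto simp: A_def)
    have b: "\<bar>e1 \<omega> \<bullet> e2 \<omega>\<bar> < 3 * \<delta> - sqrt 2 * \<delta>" using that by (auto simp: B_def algebra_simps)
    have "\<bar>(x1 \<omega> \<bullet> e2 \<omega> + e1 \<omega> \<bullet> x2 \<omega>) + e1 \<omega> \<bullet> e2 \<omega>\<bar> \<le> \<bar>x1 \<omega> \<bullet> e2 \<omega> + e1 \<omega> \<bullet> x2 \<omega>\<bar> + \<bar>e1 \<omega> \<bullet> e2 \<omega>\<bar>"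
      by (rule abs_triangle_ineq)
    then show ?thesis using a b by linarith
  qed
  let ?R = "exp (1 - c * \<delta>\<^sup>2 / \<sigma>\<^sup>2) + real CARD('d) * \<sigma> ^ 4 / (2 * \<delta>\<^sup>2)"
  have part1: "measure M {\<omega>\<in>space M. x1 \<omega> \<bullet> x2 \<omega> > v} \<le>
      measure M {\<omega>\<in>space M. (x1 \<omega> + e1 \<omega>) \<bullet> (x2 \<omega> + e2 \<omega>) > v - 3 * \<delta>} + ?R"
  proof -
    let ?Y = "{\<omega>\<in>space M. (x1 \<omega> + e1 \<omega>) \<bullet> (x2 \<omega> + e2 \<omega>) > v - 3 * \<delta>}"
    have Ym: "?Y \<in> sets M" by measurable
    have sub: "{\<omega>\<in>space M. x1 \<omega> \<bullet> x2 \<omega> > v} \<subseteq> ?Y \<union> A \<union> B"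
    proof
      fix \<omega> assume w: "\<omega> \<in> {\<omega>\<in>space M. x1 \<omega> \<bullet> x2 \<omega> > v}"
      show "\<omega> \<in> ?Y \<union> A \<union> B"
      proof (cases "\<omega> \<in> A \<or> \<omega> \<in> B")
        case False
        then have "\<bar>(x1 \<omega> \<bullet> e2 \<omega> + e1 \<omega> \<bullet> x2 \<omega>) + e1 \<omega> \<bullet> e2 \<omega>\<bar> < 3 * \<delta>" using w small by auto
        then show ?thesis using w by (simp add: yy) linarith
      qed auto
    qed
    have "measure M {\<omega>\<in>space M. x1 \<omega> \<bullet> x2 \<omega> > v} \<le> measure M (?Y \<union> A \<union> B)"
      by (rule finite_measure_mono[OF sub]) (use Ym in simp)
    also have "\<dots> \<le> measure M (?Y \<union> A) + measure M B"
      by (rule measure_Un_le) (use Ym in simp_all)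
    also have "measure M (?Y \<union> A) \<le> measure M ?Y + measure M A"
      by (rule measure_Un_le) (use Ym in simp_all)
    finally show ?thesis using PA' PB' by simp
  qed
  have part2: "measure M {\<omega>\<in>space M. x1 \<omega> \<bullet> x2 \<omega> < v} \<le>
      measure M {\<omega>\<in>space M. (x1 \<omega> + e1 \<omega>) \<bullet> (x2 \<omega> + e2 \<omega>) < v + 3 * \<delta>} + ?R"
  proof -
    let ?Y = "{\<omega>\<in>space M. (x1 \<omega> + e1 \<omega>) \<bullet> (x2 \<omega> + e2 \<omega>) < v + 3 * \<delta>}"
    have Ym: "?Y \<in> sets M" by measurable
    have sub: "{\<omega>\<in>space M. x1 \<omega> \<bullet> x2 \<omega> < v} \<subseteq> ?Y \<union> A \<union> B"
    proof
      fix \<omega> assume w: "\<omega> \<in> {\<omega>\<in>space M. x1 \<omega> \<bullet> x2 \<omega> < v}"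
      show "\<omega> \<in> ?Y \<union> A \<union> B"
      proof (cases "\<omega> \<in> A \<or> \<omega> \<in> B")
        case False
        then have "\<bar>(x1 \<omega> \<bullet> e2 \<omega> + e1 \<omega> \<bullet> x2 \<omega>) + e1 \<omega> \<bullet> e2 \<omega>\<bar> < 3 * \<delta>" using w small by auto
        then show ?thesis using w by (simp add: yy) linarith
      qed auto
    qed
    have "measure M {\<omega>\<in>space M. x1 \<omega> \<bullet> x2 \<omega> < v} \<le> measure M (?Y \<union> A \<union> B)"
      by (rule finite_measure_mono[OF sub]) (use Ym in simp)
    also have "\<dots> \<le> measure M (?Y \<union> A) + measure M B"
      by (rule measure_Un_le) (use Ym in simp_all)
    also have "measure M (?Y \<union> A) \<le> measure M ?Y + measure M A"
      by (rule measure_Un_le) (use Ym in simp_all)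
    finally show ?thesis using PA' PB' by simp
  qed
  show ?thesis using part1 part2 by linarith
qed

end
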